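(* For every integer $n\geq 2$, $\dot{\imath}_{[1,2]}(P_2\Box P_n)=\left\lfloor \frac{n+2}{2}\right\rfloor$.
   Context: $P_k$ denotes the path on $k$ vertices and $P_m\Box P_n$ the Cartesian product of two paths (the $m\times n$ grid graph). A set $S$ of vertices of a graph $G$ is independent if no two vertices of $S$ are adjacent, and dominating if every vertex not in $S$ has at least one neighbor in $S$. An independent $[1,2]$-set of $G$ is an independent dominating set $S$ such that every vertex $v\in V(G)\setminus S$ has at least one and at most two neighbors in $S$. When $G$ has an independent $[1,2]$-set, $\dot{\imath}_{[1,2]}(G)$ denotes the minimum cardinality of an independent $[1,2]$-set of $G$ (the statement includes the existence of such a set). *)

theory Defs
  imports Main
begin

text \<open>Grid graph P_m box P_n: vertices (i,j) with i < m, j < n; (i,j) and (i',j') adjacent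
iff they agree in one coordinate and differ by exactly 1 in the other.\<close>
definition grid_vertices :: "nat \<Rightarrow> nat \<Rightarrow> (nat \<times> nat) set" where
  "grid_vertices m n = {0..<m} \<times> {0..<n}"

definition grid_adj :: "(nat \<times> nat) \<Rightarrow> (nat \<times> nat) \<Rightarrow> bool" where
  "grid_adj u v \<longleftrightarrow>
     (fst u = fst v \<and> (snd u = snd v + 1 \<or> snd v = snd u + 1)) \<or>
     (snd u = snd v \<and> (fst u = fst v + 1 \<or> fst v = fst u + 1))"

definition independent_set :: "'a set \<Rightarrow> ('a \<Rightarrow> 'a \<Rightarrow> bool) \<Rightarrow> 'a set \<Rightarrow> bool" where
  "independent_set V E S \<longleftrightarrow> S \<subseteq> V \<and> (\<forall>u\<in>S. \<forall>v\<in>S. \<not> E u v)"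

definition dominating_set :: "'a set \<Rightarrow> ('a \<Rightarrow> 'a \<Rightarrow> bool) \<Rightarrow> 'a set \<Rightarrow> bool" where
  "dominating_set V E S \<longleftrightarrow> S \<subseteq> V \<and> (\<forall>v\<in>V - S. \<exists>u\<in>S. E v u)"

definition indep_12_set :: "'a set \<Rightarrow> ('a \<Rightarrow> 'a \<Rightarrow> bool) \<Rightarrow> 'a set \<Rightarrow> bool" where
  "indep_12_set V E S \<longleftrightarrow> independent_set V E S \<and> dominating_set V E S \<and>
     (\<forall>v\<in>V - S. 1 \<le> card {u\<in>S. E v u} \<and> card {u\<in>S. E v u} \<le> 2)"

definition has_indep_12_set :: "'a set \<Rightarrow> ('a \<Rightarrow> 'a \<Rightarrow> bool) \<Rightarrow> bool" where
  "has_indep_12_set V E \<longleftrightarrow> (\<exists>S. indep_12_set V E S)"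

text \<open>Minimum cardinality of an independent [1,2]-set (meaningful when one exists and V is finite).\<close>
definition i12 :: "'a set \<Rightarrow> ('a \<Rightarrow> 'a \<Rightarrow> bool) \<Rightarrow> nat" where
  "i12 V E = (LEAST k. \<exists>S. indep_12_set V E S \<and> card S = k)"

end

theory Submission
  imports Defs
begin

definition col :: "(nat\<times>nat) set \<Rightarrow> nat \<Rightarrow> nat" where
 "col S j = (if (0,j)\<in>S then 1 else 0) + (if (1,j)\<in>S then 1 else 0)"

lemma card_cols:
  assumes "S \<subseteq> grid_vertices 2 n"
  shows "card S = (\<Sum>j<n. col S j)"
proof -
  let ?V = "grid_vertices 2 n"
  have fin: "finite ?V" by (simp add: grid_vertices_def)
  have "card S = (\<Sum>v\<in>?V. if v \<in> S then 1 else 0)"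
  proof -
    have "{v\<in>?V. v\<in>S} = S" using assms by auto
    moreover have "(\<Sum>v\<in>{v\<in>?V. v\<in>S}. 1::nat) = (\<Sum>v\<in>?V. if v \<in> S then 1 else 0)"
      using sum.inter_filter[OF fin, of "\<lambda>_. 1::nat" "\<lambda>v. v\<in>S"] by simp
    ultimately show ?thesis by simp
  qed
  also have "\<dots> = (\<Sum>i\<in>{0..<2}. \<Sum>j\<in>{0..<n}. if (i,j) \<in> S then 1 else 0)"
    unfolding grid_vertices_def by (simp add: sum.cartesian_product)
  also have "\<dots> = (\<Sum>j\<in>{0..<n}. \<Sum>i\<in>{0..<2}. if (i,j) \<in> S then 1 else 0)"
    by (rule sum.swap)
  also have "\<dots> = (\<Sum>j<n. col S j)"
    by (rule sum.cong) (auto simp: col_def numeral_2_eq_2)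
  finally show ?thesis .
qed


lemma sumL: "(\<Sum>j<Suc m. if 0 < j then c (j - 1) else (0::nat)) = (\<Sum>j<m. c j)"
  by (induction m) auto

lemma sumR: "(\<Sum>j<Suc m. if j + 1 < Suc m then c (j + 1) else (0::nat)) + c 0 = (\<Sum>j<Suc m. c j)"
proof -
  have "(\<Sum>j<Suc m. if j + 1 < Suc m then c (j + 1) else (0::nat)) = (\<Sum>j<m. c (Suc j))"
    by (simp add: sum.lessThan_Suc) 
  moreover have "(\<Sum>j<Suc m. c j) = c 0 + (\<Sum>j<m. c (Suc j))" by (rule sum.lessThan_Suc_shift)
  ultimately show ?thesis by simp
qed

lemma count_bound:
  fixes c :: "nat \<Rightarrow> nat"
  assumes n: "n \<ge> 2"
  and Q: "\<And>j. j < n \<Longrightarrow> c j = 0 \<Longrightarrow>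
      (if 0 < j then c (j - 1) else 0) + (if j + 1 < n then c (j + 1) else 0) \<ge> 2"
  shows "(\<Sum>j<n. c j) \<ge> (n + 2) div 2"
proof -
  obtain m where m: "n = Suc m" using n by (cases n) auto
  define L where "L j = (if 0 < j then c (j - 1) else 0)" for j
  define R where "R j = (if j + 1 < n then c (j + 1) else 0)" for j
  define T where "T = (\<Sum>j<n. c j)"
  have D: "L j + R j + 2 * c j \<ge> 2 + (if j = 1 \<and> c 0 = 0 then 2 else 0)" if "j < n" for j
  proof (cases "c j = 0")
    case True
    then have "L j + R j \<ge> 2" using Q[OF that] unfolding L_def R_def by simp
    moreover have "j \<noteq> 1 \<or> c 0 \<noteq> 0" 
    proof (rule ccontr)
      assume "\<not> (j \<noteq> 1 \<or> c 0 \<noteq> 0)"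
      then have "j = 1" "c 0 = 0" by auto
      have "c 1 \<ge> 2" using Q[of 0] \<open>c 0 = 0\<close> n by auto
      with True \<open>j = 1\<close> show False by simp
    qed
    ultimately show ?thesis by auto
  next
    case False
    show ?thesis
    proof (cases "j = 1 \<and> c 0 = 0")
      case True
      have "c 1 \<ge> 2" using Q[of 0] True n by auto
      with True show ?thesis by simp
    qed (use False in auto)
  qed
  have "(\<Sum>j<n. 2 + (if j = 1 \<and> c 0 = 0 then 2 else 0)) \<le> (\<Sum>j<n. L j + R j + 2 * c j)"
    by (rule sum_mono) (use D in auto)
  also have "\<dots> = (\<Sum>j<n. L j) + (\<Sum>j<n. R j) + 2 * T"
    by (simp add: sum.distrib sum_distrib_left T_def)
  finally have A: "(\<Sum>j<n. 2 + (if j = 1 \<and> c 0 = 0 then 2 else 0)) \<le> (\<Sum>j<n. L j) + (\<Sum>j<n. R j) + 2 * T" .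
  have "(\<Sum>j<n. (2::nat) + (if j = 1 \<and> c 0 = 0 then 2 else 0)) = 2 * n + (if c 0 = 0 then 2 else 0)"
  proof -
    have "(\<Sum>j<n. (if j = 1 \<and> c 0 = 0 then 2 else 0::nat)) = (if c 0 = 0 then 2 else 0)"
    proof (cases "c 0 = 0")
      case True
      have "(\<Sum>j<n. (if j = 1 then 2 else 0::nat)) = 2" using n sum.delta[of "{..<n}" 1 "\<lambda>_. 2::nat"] by simp
      then show ?thesis using True by simp
    qed simp
    then show ?thesis by (simp only: sum.distrib) simp
  qed
  moreover have "(\<Sum>j<n. L j) = (\<Sum>j<m. c j)" unfolding L_def m by (rule sumL)
  moreover have "(\<Sum>j<n. R j) + c 0 = T" unfolding R_def T_def m by (rule sumR)
  moreover have "(\<Sum>j<m. c j) + c m = T" unfolding T_def m by simp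
  ultimately have "2 * n + (if c 0 = 0 then 2 else 0) + c 0 + c m \<le> 4 * T" using A by simp
  then show ?thesis unfolding T_def[symmetric] by (cases "c 0 = 0") auto
qed

definition P :: "nat \<Rightarrow> nat \<Rightarrow> nat \<Rightarrow> bool" where
 "P n i j \<longleftrightarrow> (j mod 4 = 2*i \<or> (j + 1 = n \<and> n mod 4 = 2*i))"

lemma m4: "Suc k mod 4 = (if k mod 4 = 3 then 0 else Suc (k mod 4))"
  using mod_Suc[of k 4] by simp

lemma ar1: assumes "i < 2" "P n i (Suc d)" "P n i d" "d+1 < n" shows False
proof -
  have a: "d mod 4 = 2*i" using assms(3,4) unfolding P_def by auto
  have i: "i = 0 \<or> i = 1" using assms by auto
  have b: "Suc d mod 4 = Suc (2*i)" using m4[of d] a i by auto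
  have c: "Suc (Suc d) mod 4 = (if i = 0 then 2 else 0)" using m4[of "Suc d"] b i by auto
  have "Suc d mod 4 = 2*i \<or> (Suc (Suc d) = n \<and> n mod 4 = 2*i)" using assms(2) unfolding P_def by simp
  then show False
  proof
    assume "Suc d mod 4 = 2*i" then show False using b by simp
  next
    assume "Suc (Suc d) = n \<and> n mod 4 = 2*i"
    then have "Suc (Suc d) mod 4 = 2*i" by simp
    then show False using c i by auto
  qed
qed

lemma ar2: assumes "P n 0 d" "P n 1 d" shows False
proof (cases "d + 1 = n")
  case True
  have "n mod 4 = Suc d mod 4" using True by simp
  also have "\<dots> = (if d mod 4 = 3 then 0 else Suc (d mod 4))" by (rule m4)
  finally have nm: "n mod 4 = (if d mod 4 = 3 then 0 else Suc (d mod 4))" .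
  have A: "d mod 4 = 0 \<or> n mod 4 = 0" using assms(1) True unfolding P_def by simp
  have B: "d mod 4 = 2 \<or> n mod 4 = 2" using assms(2) True unfolding P_def by simp
  have r: "d mod 4 = 0 \<or> d mod 4 = 1 \<or> d mod 4 = 2 \<or> d mod 4 = 3" by auto
  from r A B nm show False by auto
next
  case False
  then show ?thesis using assms unfolding P_def by auto
qed

lemma col_ar: assumes "j < n" shows "(if P n 0 j then 1 else 0) + (if P n 1 j then 1 else (0::nat)) =
   (if even j then 1 else 0) + (if j+1 = n \<and> even n then 1 else 0)"
proof -
  have e0: "j mod 4 mod 2 = j mod 2" by (rule mod_mod_cancel) simp
  have r: "j mod 4 = 0 \<or> j mod 4 = 1 \<or> j mod 4 = 2 \<or> j mod 4 = 3" by auto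
  have e: "even j \<longleftrightarrow> (j mod 4 = 0 \<or> j mod 4 = 2)"
    using r e0 by (auto simp: even_iff_mod_2_eq_zero)
  show ?thesis
  proof (cases "j + 1 = n")
    case True
    have nm: "n mod 4 = (if j mod 4 = 3 then 0 else Suc (j mod 4))"
      using m4[of j] True by simp
    have en: "even n \<longleftrightarrow> \<not> even j" using True by auto
    have P0: "P n 0 j \<longleftrightarrow> (j mod 4 = 0 \<or> n mod 4 = 0)" using True by (simp add: P_def)
    have P1: "P n 1 j \<longleftrightarrow> (j mod 4 = 2 \<or> n mod 4 = 2)" using True by (simp add: P_def)
    show ?thesis unfolding P0 P1 en e nm using r True by (elim disjE) simp_all
  next
    case False
    have P0: "P n 0 j \<longleftrightarrow> j mod 4 = 0" using False by (simp add: P_def)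
    have P1: "P n 1 j \<longleftrightarrow> j mod 4 = 2" using False by (simp add: P_def)
    show ?thesis unfolding P0 P1 e using r False by (elim disjE) simp_all
  qed
qed

lemma not3_ar: assumes "i < 2" "P n (1-i) (Suc k)" "P n i k" "k+2 < n" shows False
proof -
  have a: "Suc k mod 4 = 2*(1-i)" using assms(2,4) unfolding P_def by auto
  have b: "k mod 4 = 2*i" using assms(3,4) unfolding P_def by auto
  have i: "i = 0 \<or> i = 1" using assms by auto
  from i a b show False by (elim disjE) (simp_all add: m4)
qed

lemma dom_ar: assumes "i < 2" "j < n" "\<not> P n i j" shows
   "P n (1-i) j \<or> (0 < j \<and> P n i (j-1)) \<or> (j+1 < n \<and> P n i (j+1))"
proof (cases j)
  case 0
  then show ?thesis using assms unfolding P_def by auto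
next
  case (Suc k)
  have i: "i = 0 \<or> i = 1" using assms by auto
  have r: "k mod 4 = 0 \<or> k mod 4 = 1 \<or> k mod 4 = 2 \<or> k mod 4 = 3" by auto
  show ?thesis
  proof (cases "k + 2 = n")
    case True
    then have "n mod 4 = Suc (Suc k) mod 4" by simp
    then show ?thesis using i r assms True unfolding P_def Suc
      by (elim disjE) (simp_all add: m4)
  next
    case False
    then have "k + 2 < n" using assms Suc by auto
    then show ?thesis using i r assms unfolding P_def Suc
      by (elim disjE) (simp_all add: m4)
  qed
qed


definition S0 :: "nat \<Rightarrow> (nat\<times>nat) set" where
 "S0 n = {(i,j). i < 2 \<and> j < n \<and> P n i j}"

lemma S0_mem: "(i,j) \<in> S0 n \<longleftrightarrow> i < 2 \<and> j < n \<and> P n i j"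
  by (simp add: S0_def)

lemma S0_sub: "S0 n \<subseteq> grid_vertices 2 n"
  by (auto simp: S0_def grid_vertices_def)

lemma adj_cases:
  assumes "grid_adj (i,j) (a,b)" "i < 2" "a < 2"
  shows "(a,b) = (1-i,j) \<or> (0 < j \<and> (a,b) = (i,j-1)) \<or> (a,b) = (i,j+1)"
  using assms unfolding grid_adj_def by auto

lemma S0_indep: "independent_set (grid_vertices 2 n) grid_adj (S0 n)"
  unfolding independent_set_def
proof (intro conjI S0_sub ballI)
  fix u v assume u: "u \<in> S0 n" and v: "v \<in> S0 n"
  obtain a b where ab: "u = (a,b)" by (cases u)
  obtain c d where cd: "v = (c,d)" by (cases v)
  have A: "a < 2" "b < n" "P n a b" using u ab by (auto simp: S0_mem)
  have C: "c < 2" "d < n" "P n c d" using v cd by (auto simp: S0_mem)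
  show "\<not> grid_adj u v"
  proof
    assume "grid_adj u v"
    then have "(a = c \<and> (b = d + 1 \<or> d = b + 1)) \<or> (b = d \<and> (a = c + 1 \<or> c = a + 1))"
      unfolding ab cd grid_adj_def by auto
    then show False
    proof (elim disjE conjE)
      assume "a = c" "b = d + 1" then show False using ar1[of a n d] A C by simp
    next
      assume "a = c" "d = b + 1" then show False using ar1[of a n b] A C by simp
    next
      assume "b = d" "a = c + 1" then have "c = 0" "a = 1" using A by auto
      then show False using ar2[of n b] A C \<open>b = d\<close> by simp
    next
      assume "b = d" "c = a + 1" then have "a = 0" "c = 1" using C by auto
      then show False using ar2[of n b] A C \<open>b = d\<close> by simp
    qed
  qed
qed

lemma S0_ex:
  assumes v: "v \<in> grid_vertices 2 n - S0 n"
  shows "\<exists>u\<in>S0 n. grid_adj v u"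
proof -
  obtain i j where ij: "v = (i,j)" by (cases v)
  have i: "i < 2" "j < n" "\<not> P n i j" using v ij by (auto simp: grid_vertices_def S0_mem)
  from dom_ar[OF i] show ?thesis
  proof (elim disjE conjE)
    assume "P n (1-i) j" then show ?thesis using i ij
      by (intro bexI[of _ "(1-i,j)"]) (auto simp: S0_mem grid_adj_def)
  next
    assume "0 < j" "P n i (j-1)" then show ?thesis using i ij
      by (intro bexI[of _ "(i,j-1)"]) (auto simp: S0_mem grid_adj_def)
  next
    assume "j+1 < n" "P n i (j+1)" then show ?thesis using i ij
      by (intro bexI[of _ "(i,j+1)"]) (auto simp: S0_mem grid_adj_def)
  qed
qed

lemma S0_12:
  assumes v: "v \<in> grid_vertices 2 n - S0 n"
  shows "1 \<le> card {u\<in>S0 n. grid_adj v u} \<and> card {u\<in>S0 n. grid_adj v u} \<le> 2"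
proof -
  obtain i j where ij: "v = (i,j)" by (cases v)
  have i: "i < 2" "j < n" "\<not> P n i j" using v ij by (auto simp: grid_vertices_def S0_mem)
  let ?N = "{u\<in>S0 n. grid_adj v u}"
  have fin: "finite ?N"
    by (rule finite_subset[of _ "grid_vertices 2 n"]) (use S0_sub in \<open>auto simp: grid_vertices_def\<close>)
  have adj1: "grid_adj (i,j) (1-i,j)" using i by (auto simp: grid_adj_def)
  have adj2: "0 < j \<Longrightarrow> grid_adj (i,j) (i,j-1)" by (auto simp: grid_adj_def)
  have adj3: "grid_adj (i,j) (i,j+1)" by (auto simp: grid_adj_def)
  have "?N \<noteq> {}" using S0_ex[OF v] by blast
  then have c1: "1 \<le> card ?N" using fin by (simp add: Suc_le_eq card_gt_0_iff)
  have sub: "?N \<subseteq> {(1-i,j), (i,j-1), (i,j+1)}"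
  proof
    fix u assume u: "u \<in> ?N"
    obtain a b where ab: "u = (a,b)" by (cases u)
    have "a < 2" "grid_adj (i,j) (a,b)" using u ab ij by (auto simp: S0_mem)
    then show "u \<in> {(1-i,j), (i,j-1), (i,j+1)}" using adj_cases[of i j a b] i ab by auto
  qed
  have c2: "card ?N \<le> 2"
  proof (cases "(1-i,j) \<in> S0 n")
    case False
    then have "?N \<subseteq> {(i,j-1), (i,j+1)}" using sub by auto
    then have "card ?N \<le> card {(i,j-1), (i,j+1)}" by (rule card_mono[rotated]) simp
    also have "\<dots> \<le> 2" by (simp add: card_insert_le_m1)
    finally show ?thesis .
  next
    case T1: True
    show ?thesis
    proof (cases "0 < j \<and> (i,j-1) \<in> S0 n")
      case False
      have "(i,j-1) \<notin> ?N"
      proof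
        assume a: "(i,j-1) \<in> ?N"
        show False
        proof (cases "j = 0")
          case True then show False using a ij by (simp add: grid_adj_def)
        next
          case False then show False using a \<open>\<not> (0 < j \<and> (i,j-1) \<in> S0 n)\<close> by simp
        qed
      qed
      then have "?N \<subseteq> {(1-i,j), (i,j+1)}" using sub by blast
      then have "card ?N \<le> card {(1-i,j), (i,j+1)}" by (rule card_mono[rotated]) simp
      also have "\<dots> \<le> 2" by (simp add: card_insert_le_m1)
      finally show ?thesis .
    next
      case True
      obtain k where k: "j = Suc k" using True by (cases j) auto
      have "(i,j+1) \<notin> S0 n"
      proof
        assume "(i,j+1) \<in> S0 n"
        then have "k + 2 < n" using k by (simp add: S0_mem)
        then show False using not3_ar[of i n k] i T1 True k by (simp add: S0_mem)
      qed
      then have "?N \<subseteq> {(1-i,j), (i,j-1)}" using sub by auto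
      then have "card ?N \<le> card {(1-i,j), (i,j-1)}" by (rule card_mono[rotated]) simp
      also have "\<dots> \<le> 2" by (simp add: card_insert_le_m1)
      finally show ?thesis .
    qed
  qed
  show ?thesis using c1 c2 by simp
qed

lemma S0_is: "indep_12_set (grid_vertices 2 n) grid_adj (S0 n)"
proof -
  have dom: "dominating_set (grid_vertices 2 n) grid_adj (S0 n)"
    unfolding dominating_set_def
  proof (intro conjI S0_sub ballI)
    fix v assume v: "v \<in> grid_vertices 2 n - S0 n"
    show "\<exists>u\<in>S0 n. grid_adj v u" by (rule S0_ex[OF v])
  qed
  show ?thesis unfolding indep_12_set_def using S0_indep dom S0_12 by blast
qed

lemma sum_even: "(\<Sum>j<n. if even j then 1 else (0::nat)) = (n + 1) div 2"
  by (induction n) auto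

lemma S0_card: assumes "n \<ge> 1" shows "card (S0 n) = (n + 2) div 2"
proof -
  have "card (S0 n) = (\<Sum>j<n. col (S0 n) j)" by (rule card_cols[OF S0_sub])
  also have "\<dots> = (\<Sum>j<n. (if even j then 1 else 0) + (if j+1 = n \<and> even n then 1 else 0))"
  proof (rule sum.cong)
    fix j assume "j \<in> {..<n}"
    then have j: "j < n" by simp
    have "col (S0 n) j = (if P n 0 j then 1 else 0) + (if P n 1 j then 1 else (0::nat))"
      using j by (simp add: col_def S0_mem)
    then show "col (S0 n) j = (if even j then 1 else 0) + (if j+1 = n \<and> even n then 1 else 0)"
      using col_ar[OF j] by simp
  qed simp
  also have "\<dots> = (n + 1) div 2 + (\<Sum>j<n. if j+1 = n \<and> even n then 1 else (0::nat))"
    by (simp only: sum.distrib sum_even)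
  also have "(\<Sum>j<n. if j+1 = n \<and> even n then 1 else (0::nat)) = (if even n then 1 else 0)"
  proof -
    obtain m where m: "n = Suc m" using assms by (cases n) auto
    have "(\<Sum>j<n. if j+1 = n \<and> even n then 1 else (0::nat)) = (\<Sum>j<n. if j = m then (if even n then 1 else 0) else (0::nat))"
      by (rule sum.cong) (auto simp: m)
    also have "\<dots> = (if even n then 1 else 0)" by (subst sum.delta) (simp_all add: m)
    finally show ?thesis .
  qed
  finally show ?thesis by (cases "even n") (auto elim!: evenE oddE)
qed

lemma lower:
  assumes n: "n \<ge> 2" and S: "indep_12_set (grid_vertices 2 n) grid_adj S"
  shows "(n + 2) div 2 \<le> card S"
proof -
  have dom: "dominating_set (grid_vertices 2 n) grid_adj S" using S by (simp add: indep_12_set_def)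
  then have sub: "S \<subseteq> grid_vertices 2 n" by (simp add: dominating_set_def)
  have key: "\<And>i. i < 2 \<Longrightarrow> j < n \<Longrightarrow> (i,j) \<notin> S \<Longrightarrow> (1-i,j) \<notin> S \<Longrightarrow>
      (0 < j \<and> (i,j-1) \<in> S) \<or> (j+1 < n \<and> (i,j+1) \<in> S)" for j
  proof -
    fix i assume i: "i < 2" "j < n" "(i,j) \<notin> S" "(1-i,j) \<notin> S"
    then have "(i,j) \<in> grid_vertices 2 n - S" by (simp add: grid_vertices_def)
    then obtain u where u: "u \<in> S" "grid_adj (i,j) u" using dom unfolding dominating_set_def by blast
    obtain a b where ab: "u = (a,b)" by (cases u)
    have "a < 2" "b < n" using u ab sub by (auto simp: grid_vertices_def)
    then show "(0 < j \<and> (i,j-1) \<in> S) \<or> (j+1 < n \<and> (i,j+1) \<in> S)"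
      using adj_cases[of i j a b] u ab i by auto
  qed
  have "(n + 2) div 2 \<le> (\<Sum>j<n. col S j)"
  proof (rule count_bound[OF n])
    fix j assume j: "j < n" "col S j = 0"
    then have nS: "(0,j) \<notin> S" "(1,j) \<notin> S" by (auto simp: col_def split: if_splits)
    have h0: "(0 < j \<and> (0,j-1) \<in> S) \<or> (j+1 < n \<and> (0,j+1) \<in> S)" using key[of 0 j] j nS by simp
    have h1: "(0 < j \<and> (1,j-1) \<in> S) \<or> (j+1 < n \<and> (1,j+1) \<in> S)" using key[of 1 j] j nS by simp
    show "2 \<le> (if 0 < j then col S (j - 1) else 0) + (if j + 1 < n then col S (j + 1) else 0)"
    proof -
      have L: "(if 0<j then col S (j-1) else 0) \<ge> (if 0<j \<and> (0,j-1)\<in>S then 1 else 0) + (if 0<j \<and> (1,j-1)\<in>S then 1 else (0::nat))"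
        by (auto simp: col_def)
      have R: "(if j+1<n then col S (j+1) else 0) \<ge> (if j+1<n \<and> (0,j+1)\<in>S then 1 else 0) + (if j+1<n \<and> (1,j+1)\<in>S then 1 else (0::nat))"
        by (auto simp: col_def)
      have "(if 0<j \<and> (0,j-1)\<in>S then 1 else 0) + (if 0<j \<and> (1,j-1)\<in>S then 1 else (0::nat))
          + ((if j+1<n \<and> (0,j+1)\<in>S then 1 else 0) + (if j+1<n \<and> (1,j+1)\<in>S then 1 else (0::nat))) \<ge> 2"
        using h0 h1 by (elim disjE) auto
      then show ?thesis using L R by linarith
    qed
  qed
  also have "\<dots> = card S" using card_cols[OF sub] by simp
  finally show ?thesis .
qed

theorem mainTheorem3:
  fixes n :: nat
  assumes "n \<ge> 2"
  shows "has_indep_12_set (grid_vertices 2 n) grid_adj \<and>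
         i12 (grid_vertices 2 n) grid_adj = (n + 2) div 2"
proof
  show "has_indep_12_set (grid_vertices 2 n) grid_adj"
    unfolding has_indep_12_set_def using S0_is by blast
  show "i12 (grid_vertices 2 n) grid_adj = (n + 2) div 2"
    unfolding i12_def
  proof (rule Least_equality)
    show "\<exists>S. indep_12_set (grid_vertices 2 n) grid_adj S \<and> card S = (n + 2) div 2"
      using S0_is[of n] S0_card[of n] assms by (intro exI[of _ "S0 n"]) simp
  next
    fix y assume "\<exists>S. indep_12_set (grid_vertices 2 n) grid_adj S \<and> card S = y"
    then show "(n + 2) div 2 \<le> y" using lower[OF assms] by blast
  qed
qed

end
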